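(* Let $\mathcal{A}$ be a unital involutive algebra, $\sigma$ an automorphism of $\mathcal{A}$, and let $(\mathcal{A},\mathcal{H},D)$ be a $\sigma$-spectral triple. Let $h=h^*\in\mathcal{A}$ be such that $e^{h},e^{-h}\in\mathcal{A}$. Then the perturbed triple $(\mathcal{A},\mathcal{H},D')$ with $D'=e^{h}De^{h}$ is a $\sigma'$-spectral triple, where $\sigma'\in \mathrm{Aut}(\mathcal{A})$ is given by \[\sigma'(a)=e^{h}\,\sigma(e^{h}ae^{-h})\,e^{-h},\qquad a\in\mathcal{A}.\]
   Context: A $\sigma$-spectral triple (twisted spectral triple) $(\mathcal{A},\mathcal{H},D)$ consists of an algebra $\mathcal{A}$ represented by bounded operators on a Hilbert space $\mathcal{H}$, an unbounded selfadjoint operator $D$ on $\mathcal{H}$ with compact resolvent, and an automorphism $\sigma$ of $\mathcal{A}$ such that for every $a\in\mathcal{A}$ the twisted commutator $[D,a]_\sigma:=Da-\sigma(a)D$ is defined on the domain of $D$ and extends to a bounded operator on $\mathcal{H}$. The exponentials $e^{\pm h}$ are computed in the (involutive) representation. *)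

theory Defs
  imports "HOL-Analysis.Analysis"
begin

text \<open>A complex Hilbert space is modelled on a real Banach space type 'h together with
  a real-linear map J (multiplication by the imaginary unit) and a complex-valued
  inner product ip, linear in the first argument, conjugate symmetric, compatible
  with J, and inducing the given norm.\<close>

definition cscale :: "('h::real_normed_vector \<Rightarrow> 'h) \<Rightarrow> complex \<Rightarrow> 'h \<Rightarrow> 'h" where
  "cscale J c x = Re c *\<^sub>R x + Im c *\<^sub>R J x"

definition complex_hilbert ::
  "('h::banach \<Rightarrow> 'h) \<Rightarrow> ('h \<Rightarrow> 'h \<Rightarrow> complex) \<Rightarrow> bool" where
  "complex_hilbert J ip \<longleftrightarrow>
     linear J \<and> (\<forall>x. J (J x) = - x) \<and>
     (\<forall>x y z. ip (x + y) z = ip x z + ip y z) \<and>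
     (\<forall>r x y. ip (r *\<^sub>R x) y = complex_of_real r * ip x y) \<and>
     (\<forall>x y. ip (J x) y = \<i> * ip x y) \<and>
     (\<forall>x y. ip y x = cnj (ip x y)) \<and>
     (\<forall>x. ip x x = complex_of_real ((norm x)\<^sup>2))"

definition bounded_op :: "('h::real_normed_vector \<Rightarrow> 'h) \<Rightarrow> ('h \<Rightarrow> 'h) \<Rightarrow> bool" where
  "bounded_op J T \<longleftrightarrow> bounded_linear T \<and> (\<forall>x. T (J x) = J (T x))"

definition is_adjoint :: "('h \<Rightarrow> 'h \<Rightarrow> complex) \<Rightarrow> ('h \<Rightarrow> 'h) \<Rightarrow> ('h \<Rightarrow> 'h) \<Rightarrow> bool" where
  "is_adjoint ip T S \<longleftrightarrow> (\<forall>x y. ip (T x) y = ip x (S y))"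

definition op_exp :: "('h::real_normed_vector \<Rightarrow> 'h) \<Rightarrow> 'h \<Rightarrow> 'h" where
  "op_exp T x = (\<Sum>n. (1 / fact n) *\<^sub>R (T ^^ n) x)"

definition unital_star_op_algebra ::
  "('h::banach \<Rightarrow> 'h) \<Rightarrow> ('h \<Rightarrow> 'h \<Rightarrow> complex) \<Rightarrow> ('h \<Rightarrow> 'h) set \<Rightarrow> bool" where
  "unital_star_op_algebra J ip A \<longleftrightarrow>
     (\<forall>T\<in>A. bounded_op J T) \<and>
     id \<in> A \<and>
     (\<forall>S\<in>A. \<forall>T\<in>A. (\<lambda>x. S x + T x) \<in> A) \<and>
     (\<forall>S\<in>A. \<forall>T\<in>A. S \<circ> T \<in> A) \<and>
     (\<forall>c. \<forall>T\<in>A. (\<lambda>x. cscale J c (T x)) \<in> A) \<and>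
     (\<forall>T\<in>A. \<exists>S\<in>A. is_adjoint ip T S)"

definition op_algebra_aut ::
  "('h::real_normed_vector \<Rightarrow> 'h) \<Rightarrow> ('h \<Rightarrow> 'h) set \<Rightarrow> (('h \<Rightarrow> 'h) \<Rightarrow> ('h \<Rightarrow> 'h)) \<Rightarrow> bool" where
  "op_algebra_aut J A \<sigma> \<longleftrightarrow>
     bij_betw \<sigma> A A \<and>
     \<sigma> id = id \<and>
     (\<forall>S\<in>A. \<forall>T\<in>A. \<sigma> (\<lambda>x. S x + T x) = (\<lambda>x. \<sigma> S x + \<sigma> T x)) \<and>
     (\<forall>S\<in>A. \<forall>T\<in>A. \<sigma> (S \<circ> T) = \<sigma> S \<circ> \<sigma> T) \<and>
     (\<forall>c. \<forall>T\<in>A. \<sigma> (\<lambda>x. cscale J c (T x)) = (\<lambda>x. cscale J c (\<sigma> T x)))"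

text \<open>An (unbounded) operator is a pair (domain Dom, map D); only the values on Dom matter.\<close>

definition selfadjoint_op ::
  "('h::banach \<Rightarrow> 'h) \<Rightarrow> ('h \<Rightarrow> 'h \<Rightarrow> complex) \<Rightarrow> 'h set \<Rightarrow> ('h \<Rightarrow> 'h) \<Rightarrow> bool" where
  "selfadjoint_op J ip Dom D \<longleftrightarrow>
     0 \<in> Dom \<and>
     (\<forall>x\<in>Dom. \<forall>y\<in>Dom. x + y \<in> Dom \<and> D (x + y) = D x + D y) \<and>
     (\<forall>c. \<forall>x\<in>Dom. cscale J c x \<in> Dom \<and> D (cscale J c x) = cscale J c (D x)) \<and>
     closure Dom = UNIV \<and>
     \<comment> \<open>Dom(D*) = Dom(D)\<close>
     (\<forall>y. y \<in> Dom \<longleftrightarrow> (\<exists>z. \<forall>x\<in>Dom. ip (D x) y = ip x z)) \<and>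
     \<comment> \<open>D* = D on the common domain\<close>
     (\<forall>x\<in>Dom. \<forall>y\<in>Dom. ip (D x) y = ip x (D y))"

definition compact_op :: "('h::real_normed_vector \<Rightarrow> 'h) \<Rightarrow> bool" where
  "compact_op R \<longleftrightarrow> bounded_linear R \<and> compact (closure (R ` cball 0 1))"

definition compact_resolvent ::
  "('h::real_normed_vector \<Rightarrow> 'h) \<Rightarrow> 'h set \<Rightarrow> ('h \<Rightarrow> 'h) \<Rightarrow> bool" where
  "compact_resolvent J Dom D \<longleftrightarrow>
     (\<exists>mu::complex. \<exists>R.
        (\<forall>y. R y \<in> Dom \<and> D (R y) - cscale J mu (R y) = y) \<and>
        (\<forall>x\<in>Dom. R (D x - cscale J mu x) = x) \<and>
        compact_op R)"

definition sigma_spectral_triple ::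
  "('h::banach \<Rightarrow> 'h) \<Rightarrow> ('h \<Rightarrow> 'h \<Rightarrow> complex) \<Rightarrow> ('h \<Rightarrow> 'h) set \<Rightarrow>
   (('h \<Rightarrow> 'h) \<Rightarrow> ('h \<Rightarrow> 'h)) \<Rightarrow> 'h set \<Rightarrow> ('h \<Rightarrow> 'h) \<Rightarrow> bool" where
  "sigma_spectral_triple J ip A \<sigma> Dom D \<longleftrightarrow>
     complex_hilbert J ip \<and>
     unital_star_op_algebra J ip A \<and>
     op_algebra_aut J A \<sigma> \<and>
     selfadjoint_op J ip Dom D \<and>
     compact_resolvent J Dom D \<and>
     (\<forall>a\<in>A. (\<forall>x\<in>Dom. a x \<in> Dom) \<and>
        (\<exists>B. bounded_linear B \<and> (\<forall>x\<in>Dom. D (a x) - \<sigma> a (D x) = B x)))"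

end

theory Submission
  imports Defs
begin


locale chil =
  fixes J :: "'h::banach \<Rightarrow> 'h" and ip :: "'h \<Rightarrow> 'h \<Rightarrow> complex"
  assumes CH: "complex_hilbert J ip"
begin

lemma linJ: "linear J" using CH unfolding complex_hilbert_def by blast
lemma JJ[simp]: "J (J x) = - x" using CH unfolding complex_hilbert_def by blast
lemma ip_add_left: "ip (x + y) z = ip x z + ip y z" using CH unfolding complex_hilbert_def by blast
lemma ip_scaleR_left: "ip (r *\<^sub>R x) y = complex_of_real r * ip x y" using CH unfolding complex_hilbert_def by blast
lemma ip_J_left: "ip (J x) y = \<i> * ip x y" using CH unfolding complex_hilbert_def by blast
lemma ip_cnj: "ip y x = cnj (ip x y)" using CH unfolding complex_hilbert_def by blast
lemma ip_self: "ip x x = complex_of_real ((norm x)\<^sup>2)" using CH unfolding complex_hilbert_def by blast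

lemma J_add: "J (x + y) = J x + J y" using linJ by (simp add: linear_add)
lemma J_scaleR: "J (r *\<^sub>R x) = r *\<^sub>R J x" using linJ by (simp add: linear_scale)
lemma J_minus: "J (- x) = - J x" using linJ by (simp add: linear_neg)
lemma J_diff: "J (x - y) = J x - J y" using linJ by (simp add: linear_diff)
lemma J_zero[simp]: "J 0 = 0" using linJ by (simp add: linear_0)

lemma ip_add_right: "ip z (x + y) = ip z x + ip z y"
  by (metis ip_cnj ip_add_left complex_cnj_add)
lemma ip_scaleR_right: "ip x (r *\<^sub>R y) = complex_of_real r * ip x y"
  by (metis ip_cnj ip_scaleR_left complex_cnj_mult complex_cnj_complex_of_real)
lemma ip_J_right: "ip x (J y) = - \<i> * ip x y"
  by (metis ip_cnj ip_J_left complex_cnj_mult complex_cnj_i)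
lemma ip_zero_left[simp]: "ip 0 y = 0"
  using ip_scaleR_left[of 0 0 y] by simp
lemma ip_zero_right[simp]: "ip y 0 = 0"
  using ip_scaleR_right[of y 0 0] by simp
lemma ip_minus_left: "ip (- x) y = - ip x y"
  using ip_scaleR_left[of "-1" x y] by simp
lemma ip_minus_right: "ip y (- x) = - ip y x"
  using ip_scaleR_right[of y "-1" x] by simp
lemma ip_diff_left: "ip (x - z) y = ip x y - ip z y"
  using ip_add_left[of x "-z" y] ip_minus_left by simp
lemma ip_diff_right: "ip y (x - z) = ip y x - ip y z"
  using ip_add_right[of y x "-z"] ip_minus_right by simp

lemma ip_cscale_left: "ip (cscale J c x) y = c * ip x y"
  unfolding cscale_def
  by (simp add: ip_add_left ip_scaleR_left ip_J_left algebra_simps)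
     (metis complex_eq mult.commute mult.left_commute distrib_right)
lemma ip_cscale_right: "ip y (cscale J c x) = cnj c * ip y x"
  by (metis ip_cnj ip_cscale_left complex_cnj_mult)

lemma norm_J: "norm (J x) = norm x"
proof -
  have "ip (J x) (J x) = ip x x" by (simp add: ip_J_left ip_J_right)
  then have "complex_of_real ((norm (J x))\<^sup>2) = complex_of_real ((norm x)\<^sup>2)"
    by (metis ip_self)
  then have "(norm (J x))\<^sup>2 = (norm x)\<^sup>2" using of_real_eq_iff by blast
  then show ?thesis by (simp add: power2_eq_iff_nonneg)
qed

lemma bl_J: "bounded_linear J"
  using linJ norm_J unfolding bounded_linear_def bounded_linear_axioms_def
  by (metis dual_order.refl mult.comm_neutral)

lemma norm_sq_add: "(norm (x + y))\<^sup>2 = (norm x)\<^sup>2 + (norm y)\<^sup>2 + 2 * Re (ip x y)"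
proof -
  have "complex_of_real ((norm (x + y))\<^sup>2) = ip (x+y) (x+y)" by (metis ip_self)
  also have "\<dots> = ip x x + ip y y + (ip x y + ip y x)"
    by (simp add: ip_add_left ip_add_right)
  also have "ip y x = cnj (ip x y)" by (rule ip_cnj)
  finally have "complex_of_real ((norm (x + y))\<^sup>2) = ip x x + ip y y + (ip x y + cnj (ip x y))" .
  also have "ip x y + cnj (ip x y) = complex_of_real (2 * Re (ip x y))"
    by (simp add: complex_add_cnj)
  finally have E: "complex_of_real ((norm (x + y))\<^sup>2) = ip x x + ip y y + complex_of_real (2 * Re (ip x y))" .
  have "(norm (x+y))\<^sup>2 = Re (complex_of_real ((norm (x + y))\<^sup>2))" by simp
  also have "\<dots> = Re (ip x x) + Re (ip y y) + 2 * Re (ip x y)"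
    by (simp only: E plus_complex.sel Re_complex_of_real)
  also have "Re (ip x x) = (norm x)\<^sup>2" by (simp only: ip_self Re_complex_of_real)
  also have "Re (ip y y) = (norm y)\<^sup>2" by (simp only: ip_self Re_complex_of_real)
  finally show ?thesis .
qed

lemma Re_ip: "Re (ip x y) = ((norm (x + y))\<^sup>2 - (norm x)\<^sup>2 - (norm y)\<^sup>2) / 2"
  using norm_sq_add[of x y] by simp

lemma Im_ip: "Im (ip x y) = Re (ip x (J y))"
  by (simp add: ip_J_right)

lemma ip_formula: "ip x y = Complex (((norm (x + y))\<^sup>2 - (norm x)\<^sup>2 - (norm y)\<^sup>2) / 2)
    (((norm (x + J y))\<^sup>2 - (norm x)\<^sup>2 - (norm (J y))\<^sup>2) / 2)"
  by (metis Re_ip Im_ip complex_surj)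

lemma tendsto_ip:
  assumes "(f \<longlongrightarrow> a) F" "(g \<longlongrightarrow> b) F"
  shows "((\<lambda>n. ip (f n) (g n)) \<longlongrightarrow> ip a b) F"
proof -
  have Jg: "((\<lambda>n. J (g n)) \<longlongrightarrow> J b) F"
    using bounded_linear.tendsto[OF bl_J assms(2)] .
  show ?thesis
    unfolding ip_formula
    by (intro tendsto_Complex tendsto_intros assms Jg) auto
qed

lemma isCont_ip_left: "isCont (\<lambda>x. ip x y) x0"
  unfolding isCont_def by (intro tendsto_ip tendsto_ident_at tendsto_const)
lemma isCont_ip_right: "isCont (\<lambda>x. ip y x) x0"
  unfolding isCont_def by (intro tendsto_ip tendsto_ident_at tendsto_const)

lemma ip_sum_left: "ip (\<Sum>k\<in>S. f k) y = (\<Sum>k\<in>S. ip (f k) y)"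
  by (induction S rule: infinite_finite_induct) (auto simp: ip_add_left)
lemma ip_sum_right: "ip y (\<Sum>k\<in>S. f k) = (\<Sum>k\<in>S. ip y (f k))"
  by (induction S rule: infinite_finite_induct) (auto simp: ip_add_right)

lemma ip_suminf_left:
  assumes "summable f" shows "(\<lambda>n. ip (f n) y) sums ip (suminf f) y"
proof -
  have "(\<lambda>n. \<Sum>k<n. f k) \<longlonglongrightarrow> suminf f" using assms summable_LIMSEQ by blast
  then have "(\<lambda>n. ip (\<Sum>k<n. f k) y) \<longlonglongrightarrow> ip (suminf f) y"
    by (intro tendsto_ip tendsto_const)
  then show ?thesis unfolding sums_def by (simp add: ip_sum_left)
qed
lemma ip_suminf_right:
  assumes "summable f" shows "(\<lambda>n. ip y (f n)) sums ip y (suminf f)"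
proof -
  have "(\<lambda>n. \<Sum>k<n. f k) \<longlonglongrightarrow> suminf f" using assms summable_LIMSEQ by blast
  then have "(\<lambda>n. ip y (\<Sum>k<n. f k)) \<longlonglongrightarrow> ip y (suminf f)"
    by (intro tendsto_ip tendsto_const)
  then show ?thesis unfolding sums_def by (simp add: ip_sum_right)
qed

lemma ip_eq0: "ip y y = 0 \<Longrightarrow> y = 0"
  by (simp add: ip_self)

lemma dense_ip_zero:
  assumes "closure S = UNIV" "\<forall>x\<in>S. ip x y = 0" shows "y = 0"
proof -
  have "closed {x. ip x y = 0}"
    by (intro closed_Collect_eq continuous_at_imp_continuous_on ballI isCont_ip_left continuous_on_const)
  then have "closure S \<subseteq> {x. ip x y = 0}"
    using assms(2) by (intro closure_minimal) auto
  then have "ip y y = 0" using assms(1) by auto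
  then show ?thesis by (rule ip_eq0)
qed

lemma cscale_i: "cscale J \<i> x = J x" by (simp add: cscale_def)
lemma cscale_real: "cscale J (complex_of_real r) x = r *\<^sub>R x" by (simp add: cscale_def)

end



lemma bl_funpow: "bounded_linear (h::'a::real_normed_vector \<Rightarrow> 'a) \<Longrightarrow> bounded_linear (h ^^ n)"
  by (induction n) (auto intro: bounded_linear_compose bounded_linear_ident simp: id_def o_def)

lemma funpow_bound:
  fixes h :: "'a::real_normed_vector \<Rightarrow> 'a"
  assumes "\<And>x. norm (h x) \<le> norm x * K" "0 \<le> K"
  shows "norm ((h ^^ n) x) \<le> K ^ n * norm x"
proof (induction n)
  case 0 then show ?case by simp
next
  case (Suc n)
  have "norm ((h ^^ Suc n) x) \<le> norm ((h ^^ n) x) * K" using assms(1) by simp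
  also have "\<dots> \<le> K ^ n * norm x * K" using Suc assms(2) by (intro mult_right_mono) auto
  finally show ?case by (simp add: algebra_simps)
qed

lemma exp_terms_summable:
  fixes h :: "'a::real_normed_vector \<Rightarrow> 'a"
  assumes "bounded_linear h"
  obtains K where "K > 0" "\<And>n x. norm ((h ^^ n) x) \<le> K ^ n * norm x"
proof -
  obtain K where K: "K > 0" "\<And>x. norm (h x) \<le> norm x * K"
    using bounded_linear.pos_bounded[OF assms] by blast
  then show ?thesis using that funpow_bound[of h K] by auto
qed

lemma summable_exp_real: "summable (\<lambda>n. K ^ n / fact n :: real)"
  using summable_exp[of K] by (simp add: divide_inverse mult.commute)

lemma exp_norm_summable:
  fixes h :: "'a::real_normed_vector \<Rightarrow> 'a"
  assumes "bounded_linear h"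
  shows "summable (\<lambda>n. norm ((1 / fact n) *\<^sub>R (h ^^ n) x))"
proof -
  obtain K where K: "K > 0" "\<And>n x. norm ((h ^^ n) x) \<le> K ^ n * norm x"
    using exp_terms_summable[OF assms] by blast
  show ?thesis
  proof (rule summable_comparison_test)
    show "\<exists>N. \<forall>n\<ge>N. norm (norm ((1 / fact n) *\<^sub>R (h ^^ n) x)) \<le> K ^ n / fact n * norm x"
      using K(2) by (auto simp: divide_simps mult.commute)
    show "summable (\<lambda>n. K ^ n / fact n * norm x)"
      by (intro summable_mult2 summable_exp_real)
  qed
qed

lemma exp_summable: "bounded_linear (h::'a::banach \<Rightarrow> 'a) \<Longrightarrow> summable (\<lambda>n. (1 / fact n) *\<^sub>R (h ^^ n) x)"
  by (rule summable_norm_cancel[OF exp_norm_summable])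

lemma exp_sums: "bounded_linear (h::'a::banach \<Rightarrow> 'a) \<Longrightarrow> (\<lambda>n. (1 / fact n) *\<^sub>R (h ^^ n) x) sums op_exp h x"
  unfolding op_exp_def using exp_summable summable_sums by blast




lemma funpow_neg:
  fixes h :: "'a::real_normed_vector \<Rightarrow> 'a"
  assumes "bounded_linear h"
  shows "((\<lambda>x. - h x) ^^ n) x = (-1) ^ n *\<^sub>R (h ^^ n) x"
proof (induction n)
  case 0 then show ?case by simp
next
  case (Suc n)
  have "((\<lambda>x. - h x) ^^ Suc n) x = - h (((\<lambda>x. - h x) ^^ n) x)" by simp
  also have "\<dots> = - h ((-1) ^ n *\<^sub>R (h ^^ n) x)" using Suc by simp
  also have "\<dots> = (-1) ^ Suc n *\<^sub>R (h ^^ Suc n) x"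
    using linear_scale[OF bounded_linear.linear[OF assms]] by simp
  finally show ?case .
qed

lemma scalar_identity:
  "(\<Sum>i\<le>N. 1 / fact i * ((-1) ^ (N - i) / fact (N - i)) :: real) = (if N = 0 then 1 else 0)"
proof (cases "N = 0")
  case True then show ?thesis by simp
next
  case False
  have "(\<Sum>i\<le>N. 1 / fact i * ((-1) ^ (N - i) / fact (N - i)) :: real)
      = (\<Sum>i\<le>N. of_nat (N choose i) * 1 ^ i * (-1) ^ (N - i)) / fact N"
    by (simp add: sum_divide_distrib binomial_fact field_simps)
  also have "(\<Sum>i\<le>N. of_nat (N choose i) * 1 ^ i * (-1) ^ (N - i)) = (1 + (-1::real)) ^ N"
    by (rule binomial_ring[symmetric])
  also have "\<dots> = 0" using False by simp
  finally show ?thesis using False by simp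
qed

lemma exp_inverse:
  fixes h :: "'a::banach \<Rightarrow> 'a"
  assumes bl: "bounded_linear h"
  shows "op_exp h (op_exp (\<lambda>x. - h x) x) = x"
proof -
  obtain K where K: "K > 0" "\<And>n x. norm ((h ^^ n) x) \<le> K ^ n * norm x"
    using exp_terms_summable[OF bl] by blast
  define \<alpha> :: "nat \<Rightarrow> real" where "\<alpha> i = 1 / fact i" for i
  define \<beta> :: "nat \<Rightarrow> real" where "\<beta> j = (-1) ^ j / fact j" for j
  define g where "g p = (\<alpha> (fst p) * \<beta> (snd p)) *\<^sub>R (h ^^ (fst p + snd p)) x" for p
  define c where "c p = (K ^ fst p / fact (fst p)) * (K ^ snd p / fact (snd p)) * norm x" for p
  have bmh: "bounded_linear (\<lambda>x. - h x)"
    using bl bounded_linear_minus by blast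
  let ?E = "op_exp h" and ?F = "op_exp (\<lambda>x. - h x)"
  have hs_exp: "((\<lambda>n. K ^ n / fact n) has_sum exp K) UNIV"
  proof -
    have A: "(\<lambda>n. K ^ n / fact n) sums exp K"
      using exp_converges[of K] by (simp add: divide_inverse mult.commute)
    have B: "summable (\<lambda>n. norm (K ^ n / fact n))" using K(1) summable_exp_real by simp
    show ?thesis by (rule norm_summable_imp_has_sum[OF B A])
  qed
  have c_summ: "c summable_on UNIV"
  proof -
    have "c summable_on Sigma UNIV (\<lambda>_. UNIV)"
    proof (rule summable_on_SigmaI)
      fix i :: nat
      show "((\<lambda>j. c (i, j)) has_sum (K ^ i / fact i * exp K * norm x)) UNIV"
        unfolding c_def using has_sum_cmult_right[OF has_sum_cmult_left[OF hs_exp], of "K ^ i / fact i" "norm x"]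
        by (simp add: mult_ac)
      show "(\<lambda>i. K ^ i / fact i * exp K * norm x) summable_on UNIV"
        using has_sum_cmult_right[OF hs_exp, of "exp K * norm x"]
        by (auto simp: summable_on_def mult_ac)
      fix j :: nat
      show "c (i, j) \<ge> 0" unfolding c_def using K(1) by simp
    qed
    then show ?thesis by simp
  qed
  have g_norm: "norm (g p) \<le> c p" for p
  proof -
    obtain i j where p: "p = (i, j)" by (cases p)
    have "norm (g p) = \<bar>\<alpha> i * \<beta> j\<bar> * norm ((h ^^ (i + j)) x)" by (simp add: g_def p)
    also have "\<dots> \<le> \<bar>\<alpha> i * \<beta> j\<bar> * (K ^ (i + j) * norm x)"
      by (intro mult_left_mono K(2)) simp
    also have "\<dots> = c p"
      by (simp add: c_def p \<alpha>_def \<beta>_def abs_mult power_add power_abs)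
    finally show ?thesis .
  qed
  have g_abs: "(\<lambda>p. norm (g p)) summable_on UNIV"
    by (rule summable_on_comparison_test[OF c_summ]) (auto simp: g_norm)
  have g_summ: "g summable_on UNIV" using abs_summable_summable g_abs by blast
  define S where "S = infsum g UNIV"
  have gS: "(g has_sum S) (Sigma UNIV (\<lambda>_. UNIV))"
    using g_summ unfolding S_def by (simp add: has_sum_infsum)
  have F_hs: "((\<lambda>j. \<beta> j *\<^sub>R (h ^^ j) x) has_sum ?F x) UNIV"
  proof -
    have "((\<lambda>n. (1 / fact n) *\<^sub>R ((\<lambda>x. - h x) ^^ n) x) has_sum ?F x) UNIV"
      by (rule norm_summable_imp_has_sum[OF exp_norm_summable[OF bmh] exp_sums[OF bmh]])
    then show ?thesis by (simp add: funpow_neg[OF bl] \<beta>_def)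
  qed
  have E_hs: "((\<lambda>i. \<alpha> i *\<^sub>R (h ^^ i) (?F x)) has_sum ?E (?F x)) UNIV"
    using norm_summable_imp_has_sum[OF exp_norm_summable[OF bl] exp_sums[OF bl]]
    by (simp add: \<alpha>_def)
  have inner1: "((\<lambda>j. g (i, j)) has_sum (\<alpha> i *\<^sub>R (h ^^ i) (?F x))) UNIV" for i
  proof -
    have L: "bounded_linear (\<lambda>v. \<alpha> i *\<^sub>R (h ^^ i) v)"
      by (rule bounded_linear_compose[OF bounded_linear_scaleR_right bl_funpow[OF bl]])
    have "((\<lambda>j. \<alpha> i *\<^sub>R (h ^^ i) (\<beta> j *\<^sub>R (h ^^ j) x)) has_sum (\<alpha> i *\<^sub>R (h ^^ i) (?F x))) UNIV"
      using has_sum_bounded_linear[OF L F_hs] .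
    moreover have "\<alpha> i *\<^sub>R (h ^^ i) (\<beta> j *\<^sub>R (h ^^ j) x) = g (i, j)" for j
      using linear_scale[OF bounded_linear.linear[OF bl_funpow[OF bl, of i]]]
      by (simp add: g_def funpow_add)
    ultimately show ?thesis by simp
  qed
  have "((\<lambda>i. \<alpha> i *\<^sub>R (h ^^ i) (?F x)) has_sum S) UNIV"
    by (rule has_sum_SigmaD[OF gS]) (use inner1 in auto)
  then have S1: "S = ?E (?F x)" using E_hs has_sum_unique by blast
  define \<phi> :: "nat \<times> nat \<Rightarrow> nat \<times> nat" where "\<phi> p = (fst p + snd p, fst p)" for p
  define g' where "g' q = g (snd q, fst q - snd q)" for q
  have bij: "bij_betw \<phi> UNIV (Sigma UNIV (\<lambda>N. {..N}))"
    unfolding \<phi>_def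
    by (rule bij_betw_byWitness[where f' = "\<lambda>q. (snd q, fst q - snd q)"]) auto
  have "g = (\<lambda>p. g' (\<phi> p))" by (auto simp: g'_def \<phi>_def fun_eq_iff)
  then have "((\<lambda>p. g' (\<phi> p)) has_sum S) UNIV" using gS by simp
  then have g'S: "(g' has_sum S) (Sigma UNIV (\<lambda>N. {..N}))"
    using has_sum_reindex_bij_betw[OF bij] by blast
  have inner2: "((\<lambda>i. g' (N, i)) has_sum (if N = 0 then x else 0)) {..N}" for N
  proof -
    have "(\<Sum>i\<le>N. g' (N, i)) = (\<Sum>i\<le>N. (\<alpha> i * \<beta> (N - i)) *\<^sub>R (h ^^ N) x)"
      by (intro sum.cong) (auto simp: g'_def g_def)
    also have "\<dots> = (\<Sum>i\<le>N. \<alpha> i * \<beta> (N - i)) *\<^sub>R (h ^^ N) x"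
      by (simp add: scaleR_sum_left)
    also have "\<dots> = (if N = 0 then x else 0)"
      using scalar_identity[of N] by (simp add: \<alpha>_def \<beta>_def)
    finally show ?thesis using has_sum_finite[of "{..N}" "\<lambda>i. g' (N, i)"] by simp
  qed
  have "((\<lambda>N::nat. if N = 0 then x else 0) has_sum S) UNIV"
    using has_sum_SigmaD[OF g'S inner2] by simp
  moreover have "((\<lambda>N::nat. if N = 0 then x else 0) has_sum x) UNIV"
    by (rule has_sum_finite_neutralI[where B="{0}"]) auto
  ultimately have "S = x" using has_sum_unique by blast
  with S1 show ?thesis by simp
qed




lemma real_quad_zero:
  fixes a W :: real
  assumes "\<And>t. 2 * t * a \<le> t\<^sup>2 * W" "W \<ge> 0"
  shows "a = 0"
proof (cases "W = 0")
  case True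
  then have "2 * a * a \<le> 0" using assms(1)[of a] by simp
  moreover have "0 \<le> a * a" by simp
  ultimately have "a * a = 0" by linarith
  then show ?thesis by simp
next
  case False
  then have W: "W > 0" using assms(2) by simp
  have "2 * (a / W) * a \<le> (a / W)\<^sup>2 * W" using assms(1) .
  moreover have "2 * (a / W) * a = 2 * (a * a / W)" by simp
  moreover have "(a / W)\<^sup>2 * W = a * a / W" using W by (simp add: power2_eq_square)
  ultimately have "a * a / W \<le> 0" by linarith
  moreover have "0 \<le> a * a / W" using W by simp
  ultimately have "a * a / W = 0" by linarith
  then show ?thesis using W by simp
qed

context chil
begin

lemma funpow_adj:
  assumes "is_adjoint ip h h"
  shows "ip ((h ^^ n) x) y = ip x ((h ^^ n) y)"
proof (induction n arbitrary: y)
  case 0 then show ?case by simp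
next
  case (Suc n)
  have "ip ((h ^^ Suc n) x) y = ip ((h ^^ n) x) (h y)"
    using assms unfolding is_adjoint_def by simp
  also have "\<dots> = ip x ((h ^^ n) (h y))" by (rule Suc)
  also have "(h ^^ n) (h y) = (h ^^ Suc n) y" by (simp add: funpow_swap1)
  finally show ?case .
qed

lemma exp_selfadj:
  assumes bl: "bounded_linear h" and adj: "is_adjoint ip h h"
  shows "is_adjoint ip (op_exp h) (op_exp h)"
  unfolding is_adjoint_def
proof (intro allI)
  fix x y
  have A: "(\<lambda>n. ip ((1 / fact n) *\<^sub>R (h ^^ n) x) y) sums ip (op_exp h x) y"
    unfolding op_exp_def by (rule ip_suminf_left[OF exp_summable[OF bl]])
  have B: "(\<lambda>n. ip x ((1 / fact n) *\<^sub>R (h ^^ n) y)) sums ip x (op_exp h y)"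
    unfolding op_exp_def by (rule ip_suminf_right[OF exp_summable[OF bl]])
  have "(\<lambda>n. ip ((1 / fact n) *\<^sub>R (h ^^ n) x) y) = (\<lambda>n. ip x ((1 / fact n) *\<^sub>R (h ^^ n) y))"
    by (simp add: ip_scaleR_left ip_scaleR_right funpow_adj[OF adj])
  with A B show "ip (op_exp h x) y = ip x (op_exp h y)" using sums_unique2 by metis
qed

lemma parallelogram: fixes a b :: 'h shows "(norm (a + b))\<^sup>2 + (norm (a - b))\<^sup>2 = 2 * (norm a)\<^sup>2 + 2 * (norm b)\<^sup>2"
proof -
  have "(norm (a - b))\<^sup>2 = (norm (a + - b))\<^sup>2" by simp
  also have "\<dots> = (norm a)\<^sup>2 + (norm b)\<^sup>2 - 2 * Re (ip a b)"
    using norm_sq_add[of a "-b"] by (simp add: ip_minus_right)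
  finally show ?thesis using norm_sq_add[of a b] by simp
qed

lemma projection:
  assumes cl: "closed M" and M0: "0 \<in> M"
    and Madd: "\<And>a b. a \<in> M \<Longrightarrow> b \<in> M \<Longrightarrow> a + b \<in> M"
    and Msc: "\<And>a r. a \<in> M \<Longrightarrow> r *\<^sub>R a \<in> M"
    and MJ: "\<And>a. a \<in> M \<Longrightarrow> J a \<in> M"
  shows "\<exists>m\<in>M. \<forall>w\<in>M. ip w (z - m) = 0"
proof -
  define d where "d = Inf ((\<lambda>m. norm (z - m)) ` M)"
  have bdd: "bdd_below ((\<lambda>m. norm (z - m)) ` M)" by (rule bdd_belowI[of _ 0]) auto
  have d_le: "d \<le> norm (z - m)" if "m \<in> M" for m
    unfolding d_def using bdd that by (simp add: cInf_lower)
  have d0: "d \<ge> 0" using d_le[OF M0] d_le M0 unfolding d_def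
    by (intro cInf_greatest) auto
  define e :: "nat \<Rightarrow> real" where "e n = inverse (real (Suc n))" for n
  have e_pos: "e n > 0" for n by (simp add: e_def)
  have "\<exists>m\<in>M. (norm (z - m))\<^sup>2 < d\<^sup>2 + e n" for n
  proof -
    have "d < sqrt (d\<^sup>2 + e n)" using e_pos[of n] d0
      by (metis add_less_cancel_left monoid_add_class.add.right_neutral real_less_rsqrt)
    then have "Inf ((\<lambda>m. norm (z - m)) ` M) < sqrt (d\<^sup>2 + e n)" by (simp add: d_def)
    then obtain m where m: "m \<in> M" "norm (z - m) < sqrt (d\<^sup>2 + e n)"
      using cInf_lessD[of "(\<lambda>m. norm (z - m)) ` M"] M0 by blast
    then have "(norm (z - m))\<^sup>2 < d\<^sup>2 + e n"
      using e_pos[of n] d0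
      by (metis norm_ge_zero real_sqrt_less_iff real_sqrt_pow2_iff power2_less_imp_less
            real_sqrt_abs real_sqrt_less_mono abs_of_nonneg less_le_trans not_le power_mono
            power2_eq_square zero_le_power2 add_nonneg_nonneg less_imp_le real_less_lsqrt)
    with m show ?thesis by blast
  qed
  then obtain ms where ms: "\<And>n. ms n \<in> M" "\<And>n. (norm (z - ms n))\<^sup>2 < d\<^sup>2 + e n"
    by metis
  have dist_bound: "(norm (ms n - ms k))\<^sup>2 \<le> 2 * e n + 2 * e k" for n k
  proof -
    have mid: "(1/2) *\<^sub>R (ms n + ms k) \<in> M" using ms Madd Msc by blast
    have "(z - ms n) + (z - ms k) = 2 *\<^sub>R (z - (1/2) *\<^sub>R (ms n + ms k))"
      by (simp add: algebra_simps scaleR_2)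
    then have "(norm ((z - ms n) + (z - ms k)))\<^sup>2 = 4 * (norm (z - (1/2) *\<^sub>R (ms n + ms k)))\<^sup>2"
      by (simp add: power2_eq_square)
    moreover have "d\<^sup>2 \<le> (norm (z - (1/2) *\<^sub>R (ms n + ms k)))\<^sup>2"
      using d_le[OF mid] d0 by (simp add: power_mono)
    moreover have "(z - ms n) - (z - ms k) = - (ms n - ms k)" by simp
    then have "norm ((z - ms n) - (z - ms k)) = norm (ms n - ms k)" by (simp only: norm_minus_cancel)
    then have "(norm ((z - ms n) - (z - ms k)))\<^sup>2 = (norm (ms n - ms k))\<^sup>2" by simp
    ultimately show ?thesis
      using parallelogram[of "z - ms n" "z - ms k"] ms(2)[of n] ms(2)[of k] by linarith
  qed
  have e_mono: "e n \<le> e N" if "N \<le> n" for n N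
    using that by (simp add: e_def le_imp_inverse_le)
  have "Cauchy ms"
  proof (rule CauchyI)
    fix r :: real assume r: "r > 0"
    obtain N :: nat where N: "4 / r\<^sup>2 < real N" using reals_Archimedean2 by blast
    have eN: "4 * e N < r\<^sup>2"
    proof -
      have "4 / r\<^sup>2 < real (Suc N)" using N by simp
      then have "4 < r\<^sup>2 * real (Suc N)" using r by (simp add: field_simps)
      then show ?thesis unfolding e_def using r by (simp add: field_simps)
    qed
    show "\<exists>N. \<forall>m\<ge>N. \<forall>n\<ge>N. norm (ms m - ms n) < r"
    proof (intro exI allI impI)
      fix m n assume "N \<le> m" "N \<le> n"
      then have "(norm (ms m - ms n))\<^sup>2 < r\<^sup>2"
        using dist_bound[of m n] e_mono[of N m] e_mono[of N n] eN by linarith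
      then show "norm (ms m - ms n) < r" using r by (simp add: power_less_imp_less_base)
    qed
  qed
  then obtain m where lim: "ms \<longlonglongrightarrow> m" using Cauchy_convergent_iff convergent_def by blast
  have mM: "m \<in> M" using cl ms(1) lim closed_sequentially by blast
  have e_lim: "e \<longlonglongrightarrow> 0" unfolding e_def using LIMSEQ_inverse_real_of_nat .
  have "(\<lambda>n. (norm (z - ms n))\<^sup>2) \<longlonglongrightarrow> (norm (z - m))\<^sup>2"
    by (intro tendsto_intros lim)
  moreover have "(\<lambda>n. d\<^sup>2 + e n) \<longlonglongrightarrow> d\<^sup>2 + 0" by (intro tendsto_intros e_lim)
  ultimately have nm: "(norm (z - m))\<^sup>2 \<le> d\<^sup>2"
    using ms(2) by (intro LIMSEQ_le) (auto intro: less_imp_le)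
  define v where "v = z - m"
  have Re0: "Re (ip v w) = 0" if w: "w \<in> M" for w
  proof (rule real_quad_zero)
    show "(norm w)\<^sup>2 \<ge> 0" by simp
    fix t :: real
    have "m + t *\<^sub>R w \<in> M" using Madd Msc mM w by blast
    then have "d\<^sup>2 \<le> (norm (z - (m + t *\<^sub>R w)))\<^sup>2" using d_le d0 by (simp add: power_mono)
    also have "z - (m + t *\<^sub>R w) = v + - (t *\<^sub>R w)" by (simp add: v_def)
    also have "(norm (v + - (t *\<^sub>R w)))\<^sup>2 = (norm v)\<^sup>2 + t\<^sup>2 * (norm w)\<^sup>2 - 2 * t * Re (ip v w)"
      using norm_sq_add[of v "- (t *\<^sub>R w)"] by (simp add: ip_minus_right ip_scaleR_right power_mult_distrib)
    finally show "2 * t * Re (ip v w) \<le> t\<^sup>2 * (norm w)\<^sup>2" using nm by (simp add: v_def)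
  qed
  have "ip w v = 0" if w: "w \<in> M" for w
  proof -
    have "Re (ip v (J w)) = 0" using Re0 MJ w by blast
    then have "Im (ip v w) = 0" by (simp add: ip_J_right)
    moreover have "Re (ip v w) = 0" using Re0 w by blast
    ultimately have "ip v w = 0" by (simp add: complex_eq_iff)
    then show ?thesis by (metis ip_cnj complex_cnj_zero)
  qed
  then show ?thesis using mM unfolding v_def by blast
qed

end



context chil
begin

lemma cscale_m1: "cscale J (-1) x = - x" by (simp add: cscale_def)

context
  fixes Dom D assumes sa: "selfadjoint_op J ip Dom D"
begin

lemma sa_add: "x \<in> Dom \<Longrightarrow> y \<in> Dom \<Longrightarrow> x + y \<in> Dom \<and> D (x + y) = D x + D y"
  using sa unfolding selfadjoint_op_def by blast
lemma sa_cscale: "x \<in> Dom \<Longrightarrow> cscale J c x \<in> Dom \<and> D (cscale J c x) = cscale J c (D x)"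
  using sa unfolding selfadjoint_op_def by blast
lemma sa_0: "0 \<in> Dom" using sa unfolding selfadjoint_op_def by blast
lemma sa_dense: "closure Dom = UNIV" using sa unfolding selfadjoint_op_def by blast
lemma sa_char: "y \<in> Dom \<longleftrightarrow> (\<exists>z. \<forall>x\<in>Dom. ip (D x) y = ip x z)"
  using sa unfolding selfadjoint_op_def by blast
lemma sa_sym: "x \<in> Dom \<Longrightarrow> y \<in> Dom \<Longrightarrow> ip (D x) y = ip x (D y)"
  using sa unfolding selfadjoint_op_def by blast

lemma sa_minus: "x \<in> Dom \<Longrightarrow> - x \<in> Dom \<and> D (- x) = - D x"
  using sa_cscale[of x "-1"] by (simp add: cscale_m1)
lemma sa_diff: "x \<in> Dom \<Longrightarrow> y \<in> Dom \<Longrightarrow> x - y \<in> Dom \<and> D (x - y) = D x - D y"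
  using sa_add[of x "- y"] sa_minus[of y] by simp
lemma sa_scaleR: "x \<in> Dom \<Longrightarrow> r *\<^sub>R x \<in> Dom \<and> D (r *\<^sub>R x) = r *\<^sub>R D x"
  using sa_cscale[of x "complex_of_real r"] by (simp add: cscale_real)
lemma sa_J: "x \<in> Dom \<Longrightarrow> J x \<in> Dom \<and> D (J x) = J (D x)"
  using sa_cscale[of x "\<i>"] by (simp add: cscale_i)
lemma sa_D0: "D 0 = 0"
  using sa_add[OF sa_0 sa_0] by simp

lemma sa_Im: "x \<in> Dom \<Longrightarrow> Im (ip (D x) x) = 0"
proof -
  assume x: "x \<in> Dom"
  have "ip (D x) x = cnj (ip (D x) x)" using sa_sym[OF x x] ip_cnj[of "D x" x] by simp
  then have "Im (ip (D x) x) = Im (cnj (ip (D x) x))" by (rule arg_cong)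
  then have "Im (ip (D x) x) = - Im (ip (D x) x)" by simp
  then show ?thesis by linarith
qed

lemma sa_norm: "x \<in> Dom \<Longrightarrow> (norm (D x - J x))\<^sup>2 = (norm (D x))\<^sup>2 + (norm x)\<^sup>2"
proof -
  assume x: "x \<in> Dom"
  have "(norm (D x + - J x))\<^sup>2 = (norm (D x))\<^sup>2 + (norm (- J x))\<^sup>2 + 2 * Re (ip (D x) (- J x))"
    by (rule norm_sq_add)
  also have "Re (ip (D x) (- J x)) = - Im (ip (D x) x)" by (simp add: ip_minus_right ip_J_right)
  also have "\<dots> = 0" using sa_Im[OF x] by simp
  finally show ?thesis by (simp add: norm_J)
qed

lemma sa_bound: assumes x: "x \<in> Dom" shows "norm x \<le> norm (D x - J x)"
proof -
  have "(norm x)\<^sup>2 \<le> (norm (D x - J x))\<^sup>2" using sa_norm[OF x] by simp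
  then show ?thesis by (rule power2_le_imp_le) simp
qed

lemma sa_surj: "\<exists>x\<in>Dom. D x - J x = z"
proof -
  define T where "T x = D x - J x" for x
  define M where "M = T ` Dom"
  have T_diff: "T (x - y) = T x - T y" if "x \<in> Dom" "y \<in> Dom" for x y
    using sa_diff[OF that] J_diff by (simp add: T_def)
  have clM: "closed M"
    unfolding closed_sequential_limits
  proof (intro allI impI, elim conjE)
    fix y l assume y: "\<forall>n. y n \<in> M" and lim: "y \<longlonglongrightarrow> l"
    from y have "\<forall>n. \<exists>u\<in>Dom. y n = T u" unfolding M_def by blast
    then obtain x where x: "\<And>n. x n \<in> Dom" "\<And>n. y n = T (x n)" by metis
    have "Cauchy x"
    proof (rule CauchyI)
      fix r :: real assume r: "r > 0"
      from LIMSEQ_imp_Cauchy[OF lim] r obtain N where N: "\<forall>m\<ge>N. \<forall>n\<ge>N. norm (y m - y n) < r"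
        using CauchyD by blast
      show "\<exists>N. \<forall>m\<ge>N. \<forall>n\<ge>N. norm (x m - x n) < r"
      proof (intro exI allI impI)
        fix m n assume "N \<le> m" "N \<le> n"
        have "norm (x m - x n) \<le> norm (T (x m - x n))"
          unfolding T_def by (rule sa_bound) (use sa_diff x in blast)
        also have "\<dots> = norm (y m - y n)" using T_diff x by simp
        also have "\<dots> < r" using N \<open>N \<le> m\<close> \<open>N \<le> n\<close> by blast
        finally show "norm (x m - x n) < r" .
      qed
    qed
    then obtain a where xa: "x \<longlonglongrightarrow> a" using Cauchy_convergent_iff convergent_def by blast
    have Dx: "D (x n) = y n + J (x n)" for n using x by (simp add: T_def)
    have Dlim: "(\<lambda>n. D (x n)) \<longlonglongrightarrow> l + J a"
      unfolding Dx by (intro tendsto_add lim bounded_linear.tendsto[OF bl_J xa])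
    have key: "ip (D v) a = ip v (l + J a)" if v: "v \<in> Dom" for v
    proof -
      have "(\<lambda>n. ip (D v) (x n)) \<longlonglongrightarrow> ip (D v) a" by (intro tendsto_ip tendsto_const xa)
      moreover have "(\<lambda>n. ip v (D (x n))) \<longlonglongrightarrow> ip v (l + J a)" by (intro tendsto_ip tendsto_const Dlim)
      moreover have "(\<lambda>n. ip (D v) (x n)) = (\<lambda>n. ip v (D (x n)))" using sa_sym v x by auto
      ultimately show ?thesis using LIMSEQ_unique by metis
    qed
    then have aD: "a \<in> Dom" using sa_char by blast
    have "D a - (l + J a) = 0"
    proof (rule dense_ip_zero[OF sa_dense], intro ballI)
      fix v assume v: "v \<in> Dom"
      show "ip v (D a - (l + J a)) = 0"
        using key[OF v] sa_sym[OF v aD] by (simp add: ip_diff_right)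
    qed
    then have "l = T a" by (simp add: T_def algebra_simps)
    then show "l \<in> M" using aD unfolding M_def by blast
  qed
  have M0: "0 \<in> M" unfolding M_def T_def using sa_0 sa_D0 by force
  have Madd: "a + b \<in> M" if ab: "a \<in> M" "b \<in> M" for a b
  proof -
    obtain x where x: "x \<in> Dom" "a = T x" using ab(1) unfolding M_def by blast
    obtain y where y: "y \<in> Dom" "b = T y" using ab(2) unfolding M_def by blast
    have "a + b = T (x + y)" using sa_add[OF x(1) y(1)] x y by (simp add: T_def J_add)
    moreover have "x + y \<in> Dom" using sa_add[OF x(1) y(1)] by simp
    ultimately show ?thesis unfolding M_def by blast
  qed
  have Msc: "r *\<^sub>R a \<in> M" if aM: "a \<in> M" for a r
  proof -
    obtain x where x: "x \<in> Dom" "a = T x" using aM unfolding M_def by blast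
    have "r *\<^sub>R a = T (r *\<^sub>R x)" using sa_scaleR[OF x(1)] x by (simp add: T_def J_scaleR scaleR_right_diff_distrib)
    moreover have "r *\<^sub>R x \<in> Dom" using sa_scaleR[OF x(1)] by simp
    ultimately show ?thesis unfolding M_def by blast
  qed
  have MJ: "J a \<in> M" if aM: "a \<in> M" for a
  proof -
    obtain x where x: "x \<in> Dom" "a = T x" using aM unfolding M_def by blast
    have "J a = T (J x)" using x sa_J[OF x(1)] by (simp add: T_def J_diff)
    then show ?thesis using sa_J[OF x(1)] unfolding M_def by blast
  qed
  obtain m where mM: "m \<in> M" and orth: "\<forall>w\<in>M. ip w (z - m) = 0"
    using projection[OF clM M0 Madd Msc MJ] by blast
  define v where "v = z - m"
  have ev: "ip (D u) v = ip u (- J v)" if u: "u \<in> Dom" for u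
  proof -
    have "ip (T u) v = 0" using orth u unfolding M_def v_def by blast
    then have "ip (D u) v = ip (J u) v" by (simp add: T_def ip_diff_left)
    also have "\<dots> = ip u (- J v)" by (simp add: ip_J_left ip_minus_right ip_J_right)
    finally show ?thesis .
  qed
  then have vD: "v \<in> Dom" using sa_char by blast
  have "D v - (- J v) = 0"
  proof (rule dense_ip_zero[OF sa_dense], intro ballI)
    fix u assume u: "u \<in> Dom"
    show "ip u (D v - - J v) = 0" using ev[OF u] sa_sym[OF u vD] by (simp add: ip_diff_right ip_add_right ip_minus_right)
  qed
  then have Dv: "D v = - J v" by (simp add: eq_neg_iff_add_eq_0)
  have "Im (ip (D v) v) = - (norm v)\<^sup>2"
    unfolding Dv by (simp add: ip_minus_left ip_J_left ip_self)
  then have "norm v = 0" using sa_Im[OF vD] by simp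
  then have "z = m" by (simp add: v_def)
  then show ?thesis using mM unfolding M_def T_def by blast
qed

end
end



lemma compact_op_comp:
  assumes R: "compact_op R" and F: "bounded_linear F" and G: "bounded_linear G"
  shows "compact_op (\<lambda>y. F (R (G y)))"
proof -
  have blR: "bounded_linear R" using R by (simp add: compact_op_def)
  have cC: "compact (closure (R ` cball 0 1))" using R by (simp add: compact_op_def)
  obtain K where K: "K > 0" "\<And>x. norm (G x) \<le> norm x * K"
    using bounded_linear.pos_bounded[OF G] by blast
  define Q where "Q = F ` ((\<lambda>u. K *\<^sub>R u) ` closure (R ` cball 0 1))"
  have cQ: "compact Q" unfolding Q_def
    by (intro compact_continuous_image cC continuous_intros
        linear_continuous_on[OF F])
  have sub: "(\<lambda>y. F (R (G y))) ` cball 0 1 \<subseteq> Q"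
  proof
    fix z assume "z \<in> (\<lambda>y. F (R (G y))) ` cball 0 1"
    then obtain y where y: "norm y \<le> 1" "z = F (R (G y))" by auto
    define w where "w = (1 / K) *\<^sub>R G y"
    have "norm w = norm (G y) / K" using K by (simp add: w_def)
    also have "\<dots> \<le> norm y * K / K" by (intro divide_right_mono K(2)) (use K in simp)
    also have "\<dots> = norm y" using K by simp
    finally have "norm w \<le> 1" using y(1) by simp
    then have "R w \<in> closure (R ` cball 0 1)" by (intro closure_subset[THEN subsetD]) auto
    moreover have "G y = K *\<^sub>R w" using K by (simp add: w_def)
    then have "R (G y) = K *\<^sub>R R w" using linear_scale[OF bounded_linear.linear[OF blR]] by simp
    ultimately show "z \<in> Q" unfolding Q_def using y(2) by blast
  qed
  have "closure ((\<lambda>y. F (R (G y))) ` cball 0 1) \<subseteq> Q"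
    using sub cQ by (simp add: closure_minimal compact_imp_closed)
  then have "closure ((\<lambda>y. F (R (G y))) ` cball 0 1) = Q \<inter> closure ((\<lambda>y. F (R (G y))) ` cball 0 1)"
    by blast
  then have "compact (closure ((\<lambda>y. F (R (G y))) ` cball 0 1))"
    using cQ by (metis closed_closure compact_Int_closed)
  moreover have "bounded_linear (\<lambda>y. F (R (G y)))"
    by (intro bounded_linear_compose[OF F] bounded_linear_compose[OF blR G])
  ultimately show ?thesis by (simp add: compact_op_def)
qed

lemma aut_comp:
  assumes f: "op_algebra_aut J A f" and g: "op_algebra_aut J A g"
  shows "op_algebra_aut J A (\<lambda>a. f (g a))"
proof -
  have gA: "g a \<in> A" if "a \<in> A" for a using g that unfolding op_algebra_aut_def bij_betw_def by blast
  have "bij_betw (\<lambda>a. f (g a)) A A"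
    using bij_betw_trans[of g A A f A] f g unfolding op_algebra_aut_def by (simp add: o_def)
  moreover have "f (g id) = id" using f g unfolding op_algebra_aut_def by simp
  moreover have "\<forall>S\<in>A. \<forall>T\<in>A. f (g (\<lambda>x. S x + T x)) = (\<lambda>x. f (g S) x + f (g T) x)"
    using f g gA unfolding op_algebra_aut_def by simp
  moreover have "\<forall>S\<in>A. \<forall>T\<in>A. f (g (S \<circ> T)) = f (g S) \<circ> f (g T)"
    using f g gA unfolding op_algebra_aut_def by simp
  moreover have "\<forall>c. \<forall>T\<in>A. f (g (\<lambda>x. cscale J c (T x))) = (\<lambda>x. cscale J c (f (g T) x))"
    using f g gA unfolding op_algebra_aut_def by simp
  ultimately show ?thesis unfolding op_algebra_aut_def by blast
qed

lemma bop_cscale: "bounded_op J T \<Longrightarrow> T (cscale J c x) = cscale J c (T x)"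
  unfolding bounded_op_def cscale_def
  by (simp add: linear_add linear_scale bounded_linear.linear)

lemma bop_add: "bounded_op J T \<Longrightarrow> T (x + y) = T x + T y"
  unfolding bounded_op_def by (simp add: linear_add bounded_linear.linear)
lemma bop_diff: "bounded_op J T \<Longrightarrow> T (x - y) = T x - T y"
  unfolding bounded_op_def by (simp add: linear_diff bounded_linear.linear)
lemma bop_zero: "bounded_op J T \<Longrightarrow> T 0 = 0"
  unfolding bounded_op_def by (simp add: linear_0 bounded_linear.linear)
lemma bop_bl: "bounded_op J T \<Longrightarrow> bounded_linear T"
  unfolding bounded_op_def by simp
lemma bop_J: "bounded_op J T \<Longrightarrow> T (J x) = J (T x)"
  unfolding bounded_op_def by simp

lemma inner_aut:
  assumes alg: "unital_star_op_algebra J ip A" and EA: "E \<in> A" and FA: "F \<in> A"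
    and EF: "\<And>x. E (F x) = x" and FE: "\<And>x. F (E x) = x"
  shows "op_algebra_aut J A (\<lambda>a. E \<circ> a \<circ> F)"
proof -
  have comp: "S \<circ> T \<in> A" if "S \<in> A" "T \<in> A" for S T using alg that unfolding unital_star_op_algebra_def by blast
  have bE: "bounded_op J E" using alg EA unfolding unital_star_op_algebra_def by blast
  have inA: "E \<circ> a \<circ> F \<in> A" if "a \<in> A" for a using comp that EA FA by blast
  have inA': "F \<circ> a \<circ> E \<in> A" if "a \<in> A" for a using comp that EA FA by blast
  have "bij_betw (\<lambda>a. E \<circ> a \<circ> F) A A"
  proof (rule bij_betw_byWitness[where f'="\<lambda>a. F \<circ> a \<circ> E"])
    show "\<forall>a\<in>A. F \<circ> (E \<circ> a \<circ> F) \<circ> E = a" by (auto simp: fun_eq_iff FE)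
    show "\<forall>a\<in>A. E \<circ> (F \<circ> a \<circ> E) \<circ> F = a" by (auto simp: fun_eq_iff EF)
    show "(\<lambda>a. E \<circ> a \<circ> F) ` A \<subseteq> A" using inA by blast
    show "(\<lambda>a. F \<circ> a \<circ> E) ` A \<subseteq> A" using inA' by blast
  qed
  moreover have "E \<circ> id \<circ> F = id" by (auto simp: fun_eq_iff EF)
  moreover have "\<forall>S\<in>A. \<forall>T\<in>A. E \<circ> (\<lambda>x. S x + T x) \<circ> F = (\<lambda>x. (E \<circ> S \<circ> F) x + (E \<circ> T \<circ> F) x)"
    by (auto simp: fun_eq_iff bop_add[OF bE])
  moreover have "\<forall>S\<in>A. \<forall>T\<in>A. E \<circ> (S \<circ> T) \<circ> F = (E \<circ> S \<circ> F) \<circ> (E \<circ> T \<circ> F)"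
    by (auto simp: fun_eq_iff FE)
  moreover have "\<forall>c. \<forall>T\<in>A. E \<circ> (\<lambda>x. cscale J c (T x)) \<circ> F = (\<lambda>x. cscale J c ((E \<circ> T \<circ> F) x))"
    by (auto simp: fun_eq_iff bop_cscale[OF bE])
  ultimately show ?thesis unfolding op_algebra_aut_def by blast
qed




theorem lemma3p2:
  fixes J :: "'h::banach \<Rightarrow> 'h" and ip :: "'h \<Rightarrow> 'h \<Rightarrow> complex"
    and A :: "('h \<Rightarrow> 'h) set" and \<sigma> :: "('h \<Rightarrow> 'h) \<Rightarrow> ('h \<Rightarrow> 'h)"
    and Dom :: "'h set" and D :: "'h \<Rightarrow> 'h" and h :: "'h \<Rightarrow> 'h"
  assumes "complex_hilbert J ip"
    and "unital_star_op_algebra J ip A"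
    and "op_algebra_aut J A \<sigma>"
    and "sigma_spectral_triple J ip A \<sigma> Dom D"
    and "h \<in> A" and "is_adjoint ip h h"
    and "op_exp h \<in> A" and "op_exp (\<lambda>x. - h x) \<in> A"
  shows "op_algebra_aut J A
           (\<lambda>a. op_exp h \<circ> \<sigma> (op_exp h \<circ> a \<circ> op_exp (\<lambda>x. - h x)) \<circ> op_exp (\<lambda>x. - h x))
       \<and> sigma_spectral_triple J ip A
           (\<lambda>a. op_exp h \<circ> \<sigma> (op_exp h \<circ> a \<circ> op_exp (\<lambda>x. - h x)) \<circ> op_exp (\<lambda>x. - h x))
           {x. op_exp h x \<in> Dom} (op_exp h \<circ> D \<circ> op_exp h)"
proof -
  note CH = assms(1) and alg = assms(2) and aut = assms(3) and sst = assms(4)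
  interpret chil J ip by unfold_locales (rule CH)
  define E where "E = op_exp h"
  define F where "F = op_exp (\<lambda>x. - h x)"
  define \<sigma>' where "\<sigma>' = (\<lambda>a. E \<circ> \<sigma> (E \<circ> a \<circ> F) \<circ> F)"
  define Dom' where "Dom' = {x. E x \<in> Dom}"
  define D' where "D' = E \<circ> D \<circ> E"
  have bopA: "bounded_op J T" if "T \<in> A" for T using alg that unfolding unital_star_op_algebra_def by blast
  have EA: "E \<in> A" and FA: "F \<in> A" using assms(7,8) by (simp_all add: E_def F_def)
  have bE: "bounded_op J E" and bF: "bounded_op J F" using bopA EA FA by auto
  have blE: "bounded_linear E" and blF: "bounded_linear F" using bE bF by (auto simp: bop_bl)
  have blh: "bounded_linear h" using bopA[OF assms(5)] by (simp add: bop_bl)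
  have blmh: "bounded_linear (\<lambda>x. - h x)" using blh bounded_linear_minus by blast
  have EF: "E (F x) = x" for x unfolding E_def F_def by (rule exp_inverse[OF blh])
  have FE: "F (E x) = x" for x
  proof -
    have "op_exp (\<lambda>x. - h x) (op_exp (\<lambda>y. - (- h y)) x) = x" by (rule exp_inverse[OF blmh])
    then show ?thesis by (simp add: E_def F_def)
  qed
  have Eadj: "ip (E x) y = ip x (E y)" for x y
    using exp_selfadj[OF blh assms(6)] unfolding E_def is_adjoint_def by blast
  have mhadj: "is_adjoint ip (\<lambda>x. - h x) (\<lambda>x. - h x)"
    using assms(6) unfolding is_adjoint_def by (simp add: ip_minus_left ip_minus_right)
  have Fadj: "ip (F x) y = ip x (F y)" for x y
    using exp_selfadj[OF blmh mhadj] unfolding F_def is_adjoint_def by blast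
  have autc: "op_algebra_aut J A (\<lambda>a. E \<circ> a \<circ> F)"
    by (rule inner_aut[OF alg EA FA EF FE])
  have aut': "op_algebra_aut J A \<sigma>'"
  proof -
    have "op_algebra_aut J A (\<lambda>a. E \<circ> \<sigma> a \<circ> F)"
      using aut_comp[OF autc aut] .
    from aut_comp[OF this autc] show ?thesis unfolding \<sigma>'_def .
  qed
  have saD: "selfadjoint_op J ip Dom D" and crD: "compact_resolvent J Dom D"
    and comm: "\<forall>a\<in>A. (\<forall>x\<in>Dom. a x \<in> Dom) \<and> (\<exists>B. bounded_linear B \<and> (\<forall>x\<in>Dom. D (a x) - \<sigma> a (D x) = B x))"
    using sst unfolding sigma_spectral_triple_def by auto
  have D'_app: "D' x = E (D (E x))" for x by (simp add: D'_def)
  have sa': "selfadjoint_op J ip Dom' D'"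
    unfolding selfadjoint_op_def
  proof (intro conjI ballI allI)
    show "0 \<in> Dom'" using sa_0[OF saD] bop_zero[OF bE] by (simp add: Dom'_def)
  next
    fix x y assume x: "x \<in> Dom'" and y: "y \<in> Dom'"
    then have xD: "E x \<in> Dom" and yD: "E y \<in> Dom" by (auto simp: Dom'_def)
    show "x + y \<in> Dom'" using sa_add[OF saD xD yD] by (simp add: Dom'_def bop_add[OF bE])
    show "D' (x + y) = D' x + D' y" using sa_add[OF saD xD yD]
      by (simp add: D'_app bop_add[OF bE])
    show "ip (D' x) y = ip x (D' y)"
      by (simp add: D'_app Eadj sa_sym[OF saD xD yD])
  next
    fix c x assume x: "x \<in> Dom'"
    then have xD: "E x \<in> Dom" by (auto simp: Dom'_def)
    show "cscale J c x \<in> Dom'" using sa_cscale[OF saD xD] by (simp add: Dom'_def bop_cscale[OF bE])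
    show "D' (cscale J c x) = cscale J c (D' x)" using sa_cscale[OF saD xD]
      by (simp add: D'_app bop_cscale[OF bE])
  next
    have "Dom' = F ` Dom"
    proof (intro set_eqI iffI)
      fix x assume "x \<in> Dom'" then have "E x \<in> Dom" by (simp add: Dom'_def)
      then show "x \<in> F ` Dom" using FE[of x] by (metis image_eqI)
    next
      fix x assume "x \<in> F ` Dom" then obtain u where "u \<in> Dom" "x = F u" by blast
      then show "x \<in> Dom'" by (simp add: Dom'_def EF)
    qed
    moreover have "F ` closure Dom \<subseteq> closure (F ` Dom)"
      by (intro image_closure_subset linear_continuous_on[OF blF] closure_subset) simp
    moreover have "F ` UNIV = UNIV" using FE by (metis surjI)
    ultimately show "closure Dom' = UNIV" using sa_dense[OF saD] by auto
  next
    fix y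
    show "y \<in> Dom' \<longleftrightarrow> (\<exists>z. \<forall>x\<in>Dom'. ip (D' x) y = ip x z)"
    proof
      assume "y \<in> Dom'"
      then have "E y \<in> Dom" by (simp add: Dom'_def)
      then obtain z0 where z0: "\<forall>u\<in>Dom. ip (D u) (E y) = ip u z0" using sa_char[OF saD] by blast
      have "\<forall>x\<in>Dom'. ip (D' x) y = ip x (E z0)"
        using z0 by (simp add: Dom'_def D'_app Eadj[symmetric])
      then show "\<exists>z. \<forall>x\<in>Dom'. ip (D' x) y = ip x z" by blast
    next
      assume "\<exists>z. \<forall>x\<in>Dom'. ip (D' x) y = ip x z"
      then obtain z where z: "\<forall>x\<in>Dom'. ip (D' x) y = ip x z" by blast
      have "\<forall>u\<in>Dom. ip (D u) (E y) = ip u (F z)"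
      proof
        fix u assume u: "u \<in> Dom"
        have "F u \<in> Dom'" using u by (simp add: Dom'_def EF)
        then have "ip (D' (F u)) y = ip (F u) z" using z by blast
        then show "ip (D u) (E y) = ip u (F z)" by (simp add: D'_app EF Eadj Fadj)
      qed
      then have "E y \<in> Dom" using sa_char[OF saD] by blast
      then show "y \<in> Dom'" by (simp add: Dom'_def)
    qed
  qed
  obtain \<mu>0 R0 where R0: "\<And>y. R0 y \<in> Dom \<and> D (R0 y) - cscale J \<mu>0 (R0 y) = y"
    "\<And>x. x \<in> Dom \<Longrightarrow> R0 (D x - cscale J \<mu>0 x) = x" "compact_op R0"
    using crD unfolding compact_resolvent_def by blast
  define T where "T x = D' x - J x" for x
  define R where "R y = (SOME x. x \<in> Dom' \<and> T x = y)" for y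
  have R1: "R y \<in> Dom' \<and> T (R y) = y" for y
    unfolding R_def using sa_surj[OF sa', of y] someI_ex[of "\<lambda>x. x \<in> Dom' \<and> T x = y"]
    by (auto simp: T_def)
  have Tdiff: "T (x1 - x2) = T x1 - T x2" if "x1 \<in> Dom'" "x2 \<in> Dom'" for x1 x2
    using sa_diff[OF sa' that] by (simp add: T_def J_diff)
  have uniq: "x1 = x2" if "x1 \<in> Dom'" "x2 \<in> Dom'" "T x1 = T x2" for x1 x2
  proof -
    have "norm (x1 - x2) \<le> norm (T (x1 - x2))"
      unfolding T_def by (rule sa_bound[OF sa']) (use sa_diff[OF sa' that(1,2)] in blast)
    also have "\<dots> = 0" using Tdiff[OF that(1,2)] that(3) by simp
    finally show ?thesis by simp
  qed
  have R2: "R (T x) = x" if "x \<in> Dom'" for x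
    using uniq[of "R (T x)" x] R1[of "T x"] that by simp
  have blR: "bounded_linear R"
  proof (rule bounded_linear_intro[where K=1])
    fix y1 y2
    have "R y1 + R y2 \<in> Dom' \<and> T (R y1 + R y2) = y1 + y2"
      using sa_add[OF sa', of "R y1" "R y2"] R1[of y1] R1[of y2] by (simp add: T_def J_add add_diff_add)
    then show "R (y1 + y2) = R y1 + R y2" using R2 by metis
  next
    fix r y
    have "r *\<^sub>R R y \<in> Dom' \<and> T (r *\<^sub>R R y) = r *\<^sub>R y"
      using sa_scaleR[OF sa', of "R y" r] R1[of y] by (simp add: T_def J_scaleR flip: scaleR_right_diff_distrib)
    then show "R (r *\<^sub>R y) = r *\<^sub>R R y" using R2 by metis
  next
    fix y
    show "norm (R y) \<le> norm y * 1" using sa_bound[OF sa', of "R y"] R1[of y] by (simp add: T_def)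
  qed
  define G where "G y = F y + J (F (R y)) - cscale J \<mu>0 (E (R y))" for y
  have blcs: "bounded_linear (cscale J \<mu>0)"
    unfolding cscale_def
    by (intro bounded_linear_add bounded_linear_scaleR_right
        bounded_linear_compose[OF bounded_linear_scaleR_right bl_J])
  have blG: "bounded_linear G"
    unfolding G_def
    by (intro bounded_linear_sub bounded_linear_add blF
        bounded_linear_compose[OF bl_J bounded_linear_compose[OF blF blR]]
        bounded_linear_compose[OF blcs bounded_linear_compose[OF blE blR]])
  have Rform: "R y = F (R0 (G y))" for y
  proof -
    define x where "x = R y"
    define u where "u = E x"
    have uD: "u \<in> Dom" using R1[of y] by (simp add: u_def x_def Dom'_def)
    have "E (D u) - J x = y" using R1[of y] by (simp add: T_def D'_app u_def x_def)
    then have "F (E (D u) - J x) = F y" by simp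
    then have "D u - J (F x) = F y" by (simp add: bop_diff[OF bF] FE bop_J[OF bF])
    then have "D u - cscale J \<mu>0 u = G y"
      by (simp add: G_def x_def[symmetric] u_def algebra_simps)
    then have "R0 (G y) = u" using R0(2)[OF uD] by simp
    then show ?thesis by (simp add: u_def FE x_def)
  qed
  have "R = (\<lambda>y. F (R0 (G y)))" using Rform by (simp add: fun_eq_iff)
  then have cR: "compact_op R" using compact_op_comp[OF R0(3) blF blG] by simp
  have cr': "compact_resolvent J Dom' D'"
    unfolding compact_resolvent_def
  proof (intro exI conjI allI ballI)
    show "compact_op R" by (rule cR)
    fix y show "R y \<in> Dom'" using R1 by blast
    show "D' (R y) - cscale J \<i> (R y) = y" using R1[of y] by (simp add: T_def cscale_i)
  next
    fix x assume "x \<in> Dom'"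
    then show "R (D' x - cscale J \<i> x) = x" using R2 by (simp add: T_def cscale_i)
  qed
  have comm': "\<forall>a\<in>A. (\<forall>x\<in>Dom'. a x \<in> Dom') \<and>
      (\<exists>B. bounded_linear B \<and> (\<forall>x\<in>Dom'. D' (a x) - \<sigma>' a (D' x) = B x))"
  proof
    fix a assume aA: "a \<in> A"
    define b where "b = E \<circ> a \<circ> F"
    have bA: "b \<in> A" using autc aA unfolding op_algebra_aut_def bij_betw_def b_def by blast
    obtain B where B: "bounded_linear B" "\<forall>x\<in>Dom. D (b x) - \<sigma> b (D x) = B x"
      using comm bA by blast
    have bDom: "\<forall>x\<in>Dom. b x \<in> Dom" using comm bA by blast
    have ax: "E (a x) = b (E x)" for x by (simp add: b_def FE)
    have part1: "\<forall>x\<in>Dom'. a x \<in> Dom'" using bDom by (simp add: Dom'_def ax)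
    have "\<forall>x\<in>Dom'. D' (a x) - \<sigma>' a (D' x) = E (B (E x))"
    proof
      fix x assume "x \<in> Dom'"
      then have xD: "E x \<in> Dom" by (simp add: Dom'_def)
      have "D' (a x) - \<sigma>' a (D' x) = E (D (b (E x))) - E (\<sigma> b (D (E x)))"
        by (simp add: D'_app \<sigma>'_def ax FE flip: b_def)
      also have "\<dots> = E (D (b (E x)) - \<sigma> b (D (E x)))" by (simp add: bop_diff[OF bE])
      also have "\<dots> = E (B (E x))" using B(2) xD by simp
      finally show "D' (a x) - \<sigma>' a (D' x) = E (B (E x))" .
    qed
    moreover have "bounded_linear (\<lambda>x. E (B (E x)))"
      by (intro bounded_linear_compose[OF blE] bounded_linear_compose[OF B(1) blE])
    ultimately show "(\<forall>x\<in>Dom'. a x \<in> Dom') \<and>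
      (\<exists>B. bounded_linear B \<and> (\<forall>x\<in>Dom'. D' (a x) - \<sigma>' a (D' x) = B x))"
      using part1 by blast
  qed
  have "sigma_spectral_triple J ip A \<sigma>' Dom' D'"
    unfolding sigma_spectral_triple_def using CH alg aut' sa' cr' comm' by blast
  with aut' show ?thesis unfolding \<sigma>'_def Dom'_def D'_def E_def F_def by blast
qed


end
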